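(* Let $\mathcal{X}$ be an infinite domain and $l\ge1$ an integer. Then for every integer $m\ge0$ there exists an $(l-1,m)$-difficult extended mistake tree with respect to $\mathcal{C}^l$ all of whose dashed edges are labeled $+1$ (i.e. go to the right child).
   Context: $\mathcal{C}^l$ is the class of functions $\mathcal{X}\to\{-1,+1\}$ of the form $x\mapsto1-2I(x\in D)$ with $D\subseteq\mathcal{X}$, $|D|\le l$. Extended mistake tree w.r.t. a class $\mathcal{H}$: a finite full binary tree (possibly a single leaf) in which each internal node $v$ is labeled by $x_v\in\mathcal{X}$ and has two solid downward edges, to its left child (label $-1$) and right child (label $+1$), plus one dashed downward edge to one of its two children, whose label is the label of that child's direction; each leaf is labeled by some $h\in\mathcal{H}$ with $h(x_v)$ equal to the direction label at every internal node $v$ on the root-to-leaf path. A root-to-leaf path chooses at each internal node one downward edge; its length is its number of edges. The tree is $(k,m)$-difficult if every root-to-leaf path using at most $k$ solid edges has length at least $m$. *)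

theory Defs
  imports Main
begin

definition C_class :: "nat \<Rightarrow> ('x \<Rightarrow> int) set" where
  "C_class l = {h. \<exists>D. finite D \<and> card D \<le> l \<and> h = (\<lambda>x. 1 - 2 * (if x \<in> D then 1 else 0))}"

text \<open>Extended mistake trees. Node x d L R: internal node labelled x, left child L (label -1),
  right child R (label +1); the dashed edge goes to R if d = True (label +1), to L otherwise.\<close>
datatype ('x, 'h) emtree = Leaf 'h | Node 'x bool "('x, 'h) emtree" "('x, 'h) emtree"

fun em_valid :: "('x \<Rightarrow> int) set \<Rightarrow> ('x \<times> int) list \<Rightarrow> ('x, 'x \<Rightarrow> int) emtree \<Rightarrow> bool" where
  "em_valid H cs (Leaf h) = (h \<in> H \<and> (\<forall>(x, y) \<in> set cs. h x = y))"
| "em_valid H cs (Node x d L R) = (em_valid H ((x, -1) # cs) L \<and> em_valid H ((x, 1) # cs) R)"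

definition extended_mistake_tree :: "('x \<Rightarrow> int) set \<Rightarrow> ('x, 'x \<Rightarrow> int) emtree \<Rightarrow> bool" where
  "extended_mistake_tree H t = em_valid H [] t"

text \<open>Root-to-leaf paths, recorded as (number of solid edges, length).\<close>
fun em_paths :: "('x, 'h) emtree \<Rightarrow> (nat \<times> nat) set" where
  "em_paths (Leaf h) = {(0, 0)}"
| "em_paths (Node x d L R) =
     {(s + 1, n + 1) | s n. (s, n) \<in> em_paths L}
   \<union> {(s + 1, n + 1) | s n. (s, n) \<in> em_paths R}
   \<union> {(s, n + 1) | s n. (s, n) \<in> em_paths (if d then R else L)}"

definition difficult :: "nat \<Rightarrow> nat \<Rightarrow> ('x, 'h) emtree \<Rightarrow> bool" where
  "difficult k m t = (\<forall>(s, n) \<in> em_paths t. s \<le> k \<longrightarrow> m \<le> n)"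

fun dashed_all_right :: "('x, 'h) emtree \<Rightarrow> bool" where
  "dashed_all_right (Leaf h) = True"
| "dashed_all_right (Node x d L R) = (d \<and> dashed_all_right L \<and> dashed_all_right R)"

end

theory Submission
  imports Defs
begin

definition hD :: "'x set \<Rightarrow> 'x \<Rightarrow> int" where
  "hD D = (\<lambda>x. 1 - 2 * (if x \<in> D then 1 else 0))"

fun T :: "(nat \<Rightarrow> 'x) \<Rightarrow> 'x set \<Rightarrow> nat \<Rightarrow> nat \<Rightarrow> nat \<Rightarrow> ('x, 'x \<Rightarrow> int) emtree" where
  "T f D j 0 d = Leaf (hD D)"
| "T f D j (Suc n) d = (if j = 0 then Leaf (hD D) else
     Node (f d) True (T f (insert (f d) D) (j - 1) n (Suc d)) (T f D j n (Suc d)))"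

lemma T_right: "dashed_all_right (T f D j n d)"
  by (induction n arbitrary: D j d) auto

lemma T_paths: "(s, k) \<in> em_paths (T f D j n d) \<Longrightarrow> k = n \<or> j \<le> s"
proof (induction n arbitrary: D j d s k)
  case 0
  then show ?case by simp
next
  case (Suc n)
  show ?case
  proof (cases "j = 0")
    case True then show ?thesis by simp
  next
    case False
    with Suc.prems show ?thesis
      by (auto dest!: Suc.IH)
  qed
qed

lemma T_valid:
  assumes "inj f" "finite D" "card D + j \<le> l" "D \<subseteq> f ` {..<d}"
    "\<forall>(x, y) \<in> set cs. x \<in> f ` {..<d} \<and> y = (if x \<in> D then -1 else 1)"
  shows "em_valid (C_class l) cs (T f D j n d)"
  using assms
proof (induction n arbitrary: D j d cs)
  case 0
  have "hD D \<in> C_class l" using 0 unfolding C_class_def hD_def by auto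
  moreover have "\<forall>(x, y) \<in> set cs. hD D x = y" using 0(5) unfolding hD_def by auto
  ultimately show ?case by simp
next
  case (Suc n)
  show ?case
  proof (cases "j = 0")
    case True
    have "hD D \<in> C_class l" using Suc unfolding C_class_def hD_def by auto
    moreover have "\<forall>(x, y) \<in> set cs. hD D x = y" using Suc(6) unfolding hD_def by auto
    ultimately show ?thesis using True by simp
  next
    case False
    have nd: "f d \<notin> f ` {..<d}" using \<open>inj f\<close> by (auto dest: injD)
    hence ndD: "f d \<notin> D" using Suc(5) by blast
    have L: "em_valid (C_class l) ((f d, -1) # cs) (T f (insert (f d) D) (j - 1) n (Suc d))"
    proof (rule Suc.IH)
      show "inj f" "finite (insert (f d) D)" using Suc by auto
      show "card (insert (f d) D) + (j - 1) \<le> l" using Suc(4) False ndD Suc(3) by simp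
      show "insert (f d) D \<subseteq> f ` {..<Suc d}" using Suc(5) by (auto simp: lessThan_Suc)
      show "\<forall>(x, y)\<in>set ((f d, -1) # cs). x \<in> f ` {..<Suc d} \<and> y = (if x \<in> insert (f d) D then - 1 else 1)"
        using Suc(6) nd by (auto simp: lessThan_Suc split: prod.splits)
    qed
    have R: "em_valid (C_class l) ((f d, 1) # cs) (T f D j n (Suc d))"
    proof (rule Suc.IH)
      show "inj f" "finite D" "card D + j \<le> l" using Suc by auto
      show "D \<subseteq> f ` {..<Suc d}" using Suc(5) by (auto simp: lessThan_Suc)
      show "\<forall>(x, y)\<in>set ((f d, 1) # cs). x \<in> f ` {..<Suc d} \<and> y = (if x \<in> D then - 1 else 1)"
        using Suc(6) ndD by (auto simp: lessThan_Suc split: prod.splits)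
    qed
    show ?thesis using L R False by simp
  qed
qed

theorem mainTheorem19:
  fixes l m :: nat
  assumes "infinite (UNIV :: 'x set)" and "l \<ge> 1"
  shows "\<exists>t :: ('x, 'x \<Rightarrow> int) emtree.
           extended_mistake_tree (C_class l) t \<and> difficult (l - 1) m t \<and> dashed_all_right t"
proof -
  obtain f :: "nat \<Rightarrow> 'x" where f: "inj f"
    using infinite_countable_subset[OF assms(1)] by blast
  let ?t = "T f {} l m 0"
  have "extended_mistake_tree (C_class l) ?t"
    unfolding extended_mistake_tree_def by (rule T_valid[OF f]) simp_all
  moreover have "difficult (l - 1) m ?t"
    unfolding difficult_def
  proof (intro ballI, clarify)
    fix s k assume "(s, k) \<in> em_paths ?t" "s \<le> l - 1"
    then show "m \<le> k" using T_paths[of s k f "{}" l m 0] assms(2) by linarith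
  qed
  ultimately show ?thesis using T_right by blast
qed

end
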